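(* Let $\Phi=(V,\mathcal C)$ be a $(k,d,s)$-CNF formula and $c^*$ a clause with $|\mathrm{vbl}(c^* )|=k$. Let $p\ge1$ satisfy $\frac kp+\frac{ps}2\le k$, and let $\widetilde{\mathcal C}=\{c\in\mathcal C: |\mathrm{vbl}(c)\cap\mathrm{vbl}(c^* )|\ge\frac kp+\frac{ps}2\}$. Then $|\widetilde{\mathcal C}|\le p$.
   Context: A $(k,d,s)$-CNF formula is a CNF formula in which every clause contains exactly $k$ distinct variables, every variable appears in at most $d$ clauses, and any two distinct clauses share at most $s$ variables. $\mathrm{vbl}(c)$ denotes the set of variables of clause $c$. *)

theory Defs
  imports Complex_Main
begin

text \<open>A literal is a pair (variable, polarity); a clause is a set of literals;
  a CNF formula is a pair (V, C) of a variable set and a set of clauses.\<close>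

type_synonym 'v clause = "('v \<times> bool) set"

definition vbl :: "'v clause \<Rightarrow> 'v set" where
  "vbl c = fst ` c"

definition kds_CNF :: "nat \<Rightarrow> nat \<Rightarrow> nat \<Rightarrow> 'v set \<Rightarrow> 'v clause set \<Rightarrow> bool" where
  "kds_CNF k d s V C \<longleftrightarrow>
     finite V \<and> finite C \<and>
     (\<forall>c\<in>C. finite c \<and> vbl c \<subseteq> V \<and> card (vbl c) = k) \<and>
     (\<forall>x\<in>V. card {c\<in>C. x \<in> vbl c} \<le> d) \<and>
     (\<forall>c\<in>C. \<forall>c'\<in>C. c \<noteq> c' \<longrightarrow> card (vbl c \<inter> vbl c') \<le> s)"

end

theory Submission
  imports Defs
begin

lemma union_lower:
  fixes A :: "'c \<Rightarrow> 'v set" and a :: real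
  assumes "finite S" "\<forall>c\<in>S. finite (A c) \<and> real (card (A c)) \<ge> a"
    and "\<forall>c\<in>S. \<forall>c'\<in>S. c \<noteq> c' \<longrightarrow> card (A c \<inter> A c') \<le> s"
  shows "real (card (\<Union>(A ` S))) \<ge> real (card S) * a - real s * real (card S) * (real (card S) - 1) / 2"
  using assms
proof (induction S rule: finite_induct)
  case empty
  then show ?case by simp
next
  case (insert x S)
  let ?U = "\<Union>(A ` S)"
  let ?n = "card S"
  have IH: "real (card ?U) \<ge> real ?n * a - real s * real ?n * (real ?n - 1) / 2"
    using insert by auto
  have fU: "finite ?U" using insert by auto
  have fx: "finite (A x)" and ax: "real (card (A x)) \<ge> a" using insert by auto
  have e1: "A x \<inter> ?U = (\<Union>c\<in>S. A x \<inter> A c)" by auto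
  have "card (A x \<inter> ?U) \<le> (\<Sum>c\<in>S. card (A x \<inter> A c))"
    unfolding e1 by (rule card_UN_le[OF insert.hyps(1)])
  also have "\<dots> \<le> (\<Sum>c\<in>S. s)"
    apply (rule sum_mono) using insert by (metis insertCI)
  finally have int: "card (A x \<inter> ?U) \<le> ?n * s" by simp
  have un: "card (A x \<union> ?U) + card (A x \<inter> ?U) = card (A x) + card ?U"
    using card_Un_Int[OF fx fU] by simp
  have eq: "\<Union>(A ` insert x S) = A x \<union> ?U" by simp
  have cs: "card (insert x S) = ?n + 1" using insert by simp
  have "real (card (A x \<union> ?U)) = real (card (A x)) + real (card ?U) - real (card (A x \<inter> ?U))"
    using un by (metis add_diff_cancel_right' of_nat_add)
  moreover have "real (card (A x \<inter> ?U)) \<le> real ?n * real s" using int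
    by (metis of_nat_le_iff of_nat_mult)
  ultimately have "real (card (A x \<union> ?U)) \<ge> a + (real ?n * a - real s * real ?n * (real ?n - 1) / 2) - real ?n * real s"
    using IH ax by linarith
  moreover have "a + (real ?n * a - real s * real ?n * (real ?n - 1) / 2) - real ?n * real s
     = real (?n+1) * a - real s * real (?n+1) * (real (?n+1) - 1) / 2"
    by (simp add: field_simps)
  ultimately show ?case using eq cs by simp
qed

theorem corollary3p9:
  fixes V :: "'v set" and C :: "'v clause set" and cstar :: "'v clause"
    and k d s :: nat and p :: real
  assumes "kds_CNF k d s V C"
    and "finite (vbl cstar)" and "card (vbl cstar) = k"
    and "p \<ge> 1"
    and "real k / p + p * real s / 2 \<le> real k"
  shows "real (card {c\<in>C. real (card (vbl c \<inter> vbl cstar)) \<ge> real k / p + p * real s / 2}) \<le> p"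
proof -
  define a where "a = real k / p + p * real s / 2"
  define T where "T = {c\<in>C. real (card (vbl c \<inter> vbl cstar)) \<ge> a}"
  have fC: "finite C" and clC: "\<forall>c\<in>C. finite c \<and> card (vbl c) = k"
    and pw: "\<forall>c\<in>C. \<forall>c'\<in>C. c \<noteq> c' \<longrightarrow> card (vbl c \<inter> vbl c') \<le> s"
    using assms(1) unfolding kds_CNF_def by auto
  have fT: "finite T" using fC unfolding T_def by auto
  show ?thesis
  proof (cases "k = 0")
    case True
    have "T \<subseteq> {{}}"
    proof
      fix c assume "c \<in> T"
      hence "c \<in> C" unfolding T_def by auto
      hence "finite c" "card (vbl c) = 0" using clC True by auto
      hence "vbl c = {}" unfolding vbl_def by auto
      thus "c \<in> {{}}" unfolding vbl_def by auto
    qed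
    hence "card T \<le> card {{}::'v clause}" by (intro card_mono) auto
    hence "card T \<le> 1" by simp
    thus ?thesis unfolding T_def a_def using assms(4) by linarith
  next
    case False
    show ?thesis
    proof (rule ccontr)
      assume "\<not> ?thesis"
      hence gt: "real (card T) > p" unfolding T_def a_def by simp
      define t where "t = nat \<lfloor>p\<rfloor> + 1"
      have tp: "real t > p" "real t - 1 \<le> p" unfolding t_def using assms(4)
        by (simp_all add: of_nat_nat) linarith+
      have "real (nat \<lfloor>p\<rfloor>) \<le> p" using assms(4) by (simp add: of_nat_nat)
      hence "real (nat \<lfloor>p\<rfloor>) < real (card T)" using gt by linarith
      hence "nat \<lfloor>p\<rfloor> < card T" by (simp only: of_nat_less_iff)
      hence "t \<le> card T" unfolding t_def by simp
      then obtain S where S: "S \<subseteq> T" "card S = t" by (meson obtain_subset_with_card_n)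
      have fS: "finite S" using S fT finite_subset by blast
      let ?A = "\<lambda>c. vbl c \<inter> vbl cstar"
      have "real (card (\<Union>(?A ` S))) \<ge> real (card S) * a - real s * real (card S) * (real (card S) - 1) / 2"
      proof (rule union_lower[OF fS])
        show "\<forall>c\<in>S. finite (?A c) \<and> a \<le> real (card (?A c))"
          using S assms(2) unfolding T_def by auto
        show "\<forall>c\<in>S. \<forall>c'\<in>S. c \<noteq> c' \<longrightarrow> card (?A c \<inter> ?A c') \<le> s"
        proof (intro ballI impI)
          fix c c' assume "c \<in> S" "c' \<in> S" "c \<noteq> c'"
          hence cc: "c \<in> C" "c' \<in> C" using S unfolding T_def by auto
          hence "finite (vbl c)" using clC unfolding vbl_def by auto
          hence "card (?A c \<inter> ?A c') \<le> card (vbl c \<inter> vbl c')" by (intro card_mono) auto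
          thus "card (?A c \<inter> ?A c') \<le> s" using pw cc \<open>c \<noteq> c'\<close> by fastforce
        qed
      qed
      moreover have "card (\<Union>(?A ` S)) \<le> k"
        using card_mono[OF assms(2), of "\<Union>(?A ` S)"] assms(3) by auto
      ultimately have key: "real k \<ge> real t * a - real s * real t * (real t - 1) / 2"
        unfolding S(2) using of_nat_le_iff by (smt (verit))
      have "real s * real t * (real t - 1) / 2 \<le> real s * real t * p / 2"
        using tp by (intro divide_right_mono mult_left_mono) auto
      moreover have "real t * a = real t * (real k / p) + real s * real t * p / 2"
        unfolding a_def by (simp add: algebra_simps)
      ultimately have "real k \<ge> real t * (real k / p)"
        using key by linarith
      moreover have "real t * (real k / p) > real k"
      proof -
        have "real t * (real k / p) = (real t / p) * real k" by simp
        moreover have "real t / p > 1" using tp assms(4) by simp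
        moreover have "(real t / p) * real k > 1 * real k"
          using \<open>real t / p > 1\<close> False by (intro mult_strict_right_mono) auto
        ultimately show ?thesis by simp
      qed
      ultimately show False by linarith
    qed
  qed
qed

end
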